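(* Let $\widehat P$ be any transition kernel on finite $\mathcal S\times\mathcal A$, $r:\mathcal S\times\mathcal A\to[0,1]$, $n\ge2$ an integer, $s_0\in\mathcal S$, $\underline{\widehat P}=(1-\frac1n)\widehat P+\frac1n\mathbf 1e_{s_0}^\top$, and $\underline{\widehat{\mathcal T}}(h)(s)=\max_a\big(r(s,a)+\sum_{s'}\underline{\widehat P}(s'|s,a)h(s')\big)$. Suppose a policy $\pi$ satisfies one of: (i) $\pi$ is greedy with respect to $r+\underline{\widehat P}h$ for some $h$ with $\|\underline{\widehat h}^\star-h\|_{\mathrm{sp}}\le\frac1{n^2}$; (ii) $\underline{\widehat{\mathcal T}}(\underline{\widehat h}^\pi)\le\underline{\widehat h}^\pi+\underline{\widehat\rho}^\pi+\frac1{n^2}\mathbf 1$; (iii) $\underline{\widehat\rho}^\pi\ge\underline{\widehat\rho}^\star-\frac1{3n^2}\mathbf 1$ and $\|\underline{\widehat h}^\pi-\underline{\widehat h}^\star\|_\infty\le\frac1{3n^2}$. Then $\|\widehat V^\star_{1-\frac1n}-\widehat V^\pi_{1-\frac1n}\|_\infty\le\frac1n$. Furthermore, whenever $\|\widehat V^\star_{1-\frac1n}-\widehat V^\pi_{1-\frac1n}\|_\infty\le\frac1n$ holds, one has $\underline{\widehat\rho}^\pi\ge\underline{\widehat\rho}^\star-\frac1{n^2}\mathbf 1$ and $\|\underline{\widehat h}^\pi-\underline{\widehat h}^\star\|_{\mathrm{sp}}\le\frac2n$.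
   Context: $\underline{\widehat P}(s'|s,a)=(1-\frac1n)\widehat P(s'|s,a)+\frac1n\mathbb 1\{s'=s_0\}$. Policies stationary Markov, possibly randomized; a policy is greedy with respect to $x\in\mathbb R^{\mathcal S\times\mathcal A}$ if $\sum_a\pi(a|s)x(s,a)=\max_ax(s,a)$ for all $s$. $\widehat V^\pi_\gamma=(I-\gamma\widehat P_\pi)^{-1}r_\pi$, $\widehat V^\star_\gamma=\max_\pi\widehat V^\pi_\gamma$. $\underline{\widehat\rho}^\pi,\underline{\widehat h}^\pi$ are the gain $Q^\infty_\pi r_\pi$ and bias $\mathrm{C\text{-}lim}_T\sum_{t<T}(Q^t_\pi r_\pi-Q^\infty_\pi r_\pi)$ of $\pi$ with $Q=\underline{\widehat P}$ ($Q^\infty_\pi$ the Cesàro limit of $Q_\pi^t$); $\underline{\widehat\rho}^\star,\underline{\widehat h}^\star$ those of a Blackwell-optimal policy of $(\underline{\widehat P},r)$. $\|x\|_{\mathrm{sp}}=\max x-\min x$; inequalities elementwise. *)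

theory Defs
  imports "HOL-Analysis.Analysis"
begin

text \<open>Finite MDP with state type 's and action type 'a (both finite).
  Kernel P s a s' = P(s'|s,a); reward r s a; policy \<pi> s a = \<pi>(a|s).\<close>

definition is_kernel :: "('s::finite \<Rightarrow> 'a::finite \<Rightarrow> 's \<Rightarrow> real) \<Rightarrow> bool" where
  "is_kernel P \<longleftrightarrow> (\<forall>s a s'. 0 \<le> P s a s') \<and> (\<forall>s a. (\<Sum>s'\<in>UNIV. P s a s') = 1)"

definition is_policy :: "('s::finite \<Rightarrow> 'a::finite \<Rightarrow> real) \<Rightarrow> bool" where
  "is_policy \<pi> \<longleftrightarrow> (\<forall>s a. 0 \<le> \<pi> s a) \<and> (\<forall>s. (\<Sum>a\<in>UNIV. \<pi> s a) = 1)"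

definition anchored :: "nat \<Rightarrow> 's \<Rightarrow> ('s \<Rightarrow> 'a \<Rightarrow> 's \<Rightarrow> real) \<Rightarrow> ('s \<Rightarrow> 'a \<Rightarrow> 's \<Rightarrow> real)" where
  "anchored n s0 P = (\<lambda>s a s'. (1 - 1 / real n) * P s a s' + (1 / real n) * (if s' = s0 then 1 else 0))"

definition pol_mat :: "('s::finite \<Rightarrow> 'a::finite \<Rightarrow> 's \<Rightarrow> real) \<Rightarrow> ('s \<Rightarrow> 'a \<Rightarrow> real) \<Rightarrow> real^'s^'s" where
  "pol_mat P \<pi> = (\<chi> s s'. \<Sum>a\<in>UNIV. \<pi> s a * P s a s')"

definition pol_rew :: "('s::finite \<Rightarrow> 'a::finite \<Rightarrow> real) \<Rightarrow> ('s \<Rightarrow> 'a \<Rightarrow> real) \<Rightarrow> real^'s" where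
  "pol_rew r \<pi> = (\<chi> s. \<Sum>a\<in>UNIV. \<pi> s a * r s a)"

fun mpow :: "real^'n^'n \<Rightarrow> nat \<Rightarrow> real^'n^'n" where
  "mpow M 0 = mat 1"
| "mpow M (Suc t) = M ** mpow M t"

definition disc_value :: "('s::finite \<Rightarrow> 'a::finite \<Rightarrow> 's \<Rightarrow> real) \<Rightarrow> ('s \<Rightarrow> 'a \<Rightarrow> real) \<Rightarrow> real \<Rightarrow> ('s \<Rightarrow> 'a \<Rightarrow> real) \<Rightarrow> real^'s" where
  "disc_value P r \<gamma> \<pi> = matrix_inv (mat 1 - \<gamma> *\<^sub>R pol_mat P \<pi>) *v pol_rew r \<pi>"

definition opt_disc_value :: "('s::finite \<Rightarrow> 'a::finite \<Rightarrow> 's \<Rightarrow> real) \<Rightarrow> ('s \<Rightarrow> 'a \<Rightarrow> real) \<Rightarrow> real \<Rightarrow> real^'s" where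
  "opt_disc_value P r \<gamma> = (\<chi> s. SUP \<pi>\<in>{\<pi>. is_policy \<pi>}. disc_value P r \<gamma> \<pi> $ s)"

definition cesaro_lim :: "(nat \<Rightarrow> 'v::real_normed_vector) \<Rightarrow> 'v" where
  "cesaro_lim x = lim (\<lambda>N. (1 / real N) *\<^sub>R (\<Sum>T<N. x T))"

definition gain :: "('s::finite \<Rightarrow> 'a::finite \<Rightarrow> 's \<Rightarrow> real) \<Rightarrow> ('s \<Rightarrow> 'a \<Rightarrow> real) \<Rightarrow> ('s \<Rightarrow> 'a \<Rightarrow> real) \<Rightarrow> real^'s" where
  "gain P r \<pi> = cesaro_lim (\<lambda>t. mpow (pol_mat P \<pi>) t) *v pol_rew r \<pi>"

definition bias :: "('s::finite \<Rightarrow> 'a::finite \<Rightarrow> 's \<Rightarrow> real) \<Rightarrow> ('s \<Rightarrow> 'a \<Rightarrow> real) \<Rightarrow> ('s \<Rightarrow> 'a \<Rightarrow> real) \<Rightarrow> real^'s" where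
  "bias P r \<pi> = cesaro_lim (\<lambda>T. \<Sum>t<T. mpow (pol_mat P \<pi>) t *v pol_rew r \<pi> - gain P r \<pi>)"

definition blackwell_optimal :: "('s::finite \<Rightarrow> 'a::finite \<Rightarrow> 's \<Rightarrow> real) \<Rightarrow> ('s \<Rightarrow> 'a \<Rightarrow> real) \<Rightarrow> ('s \<Rightarrow> 'a \<Rightarrow> real) \<Rightarrow> bool" where
  "blackwell_optimal P r \<pi> \<longleftrightarrow> is_policy \<pi> \<and>
     (\<exists>\<gamma>0<1. \<forall>\<gamma>. \<gamma>0 < \<gamma> \<and> \<gamma> < 1 \<longrightarrow>
        (\<forall>\<pi>'. is_policy \<pi>' \<longrightarrow> (\<forall>s. disc_value P r \<gamma> \<pi>' $ s \<le> disc_value P r \<gamma> \<pi> $ s)))"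

definition opt_gain :: "('s::finite \<Rightarrow> 'a::finite \<Rightarrow> 's \<Rightarrow> real) \<Rightarrow> ('s \<Rightarrow> 'a \<Rightarrow> real) \<Rightarrow> real^'s" where
  "opt_gain P r = gain P r (SOME \<pi>. blackwell_optimal P r \<pi>)"

definition opt_bias :: "('s::finite \<Rightarrow> 'a::finite \<Rightarrow> 's \<Rightarrow> real) \<Rightarrow> ('s \<Rightarrow> 'a \<Rightarrow> real) \<Rightarrow> real^'s" where
  "opt_bias P r = bias P r (SOME \<pi>. blackwell_optimal P r \<pi>)"

definition bellman :: "('s::finite \<Rightarrow> 'a::finite \<Rightarrow> 's \<Rightarrow> real) \<Rightarrow> ('s \<Rightarrow> 'a \<Rightarrow> real) \<Rightarrow> real^'s \<Rightarrow> real^'s" where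
  "bellman P r h = (\<chi> s. Max (range (\<lambda>a. r s a + (\<Sum>s'\<in>UNIV. P s a s' * h $ s'))))"

definition greedy :: "('s::finite \<Rightarrow> 'a::finite \<Rightarrow> real) \<Rightarrow> ('s \<Rightarrow> 'a \<Rightarrow> real) \<Rightarrow> bool" where
  "greedy \<pi> x \<longleftrightarrow> (\<forall>s. (\<Sum>a\<in>UNIV. \<pi> s a * x s a) = Max (range (x s)))"

definition sp_norm :: "real^'s::finite \<Rightarrow> real" where
  "sp_norm v = Max (range (\<lambda>s. v $ s)) - Min (range (\<lambda>s. v $ s))"

definition sup_norm :: "real^'s::finite \<Rightarrow> real" where
  "sup_norm v = Max (range (\<lambda>s. \<bar>v $ s\<bar>))"

end

theory Submission imports Defs "HOL-Computational_Algebra.Polynomial" begin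

definition Tq :: "('s::finite \<Rightarrow> 'a::finite \<Rightarrow> 's \<Rightarrow> real) \<Rightarrow> ('s \<Rightarrow> 'a \<Rightarrow> real) \<Rightarrow> real \<Rightarrow> real^'s \<Rightarrow> 's \<Rightarrow> 'a \<Rightarrow> real" where
  "Tq P r d W s a = r s a + d * (\<Sum>s'\<in>UNIV. P s a s' * W$s')"

lemma pol_mat_mult: "(pol_mat P \<pi> *v W) $ s = (\<Sum>a\<in>UNIV. \<pi> s a * (\<Sum>s'\<in>UNIV. P s a s' * W$s'))"
proof -
  have "(pol_mat P \<pi> *v W) $ s = (\<Sum>s'\<in>UNIV. \<Sum>a\<in>UNIV. \<pi> s a * P s a s' * W$s')"
    by (simp add: pol_mat_def matrix_vector_mult_def sum_distrib_right)
  also have "\<dots> = (\<Sum>a\<in>UNIV. \<Sum>s'\<in>UNIV. \<pi> s a * P s a s' * W$s')"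
    by (rule sum.swap)
  also have "\<dots> = (\<Sum>a\<in>UNIV. \<pi> s a * (\<Sum>s'\<in>UNIV. P s a s' * W$s'))"
    by (simp add: sum_distrib_left mult.assoc)
  finally show ?thesis .
qed

lemma pol_expand: "pol_rew r \<pi> $ s + d * (pol_mat P \<pi> *v W) $ s = (\<Sum>a\<in>UNIV. \<pi> s a * Tq P r d W s a)"
  by (simp add: pol_mat_mult pol_rew_def Tq_def sum_distrib_left sum.distrib algebra_simps)

lemma conv_le:
  fixes \<pi> :: "'s::finite \<Rightarrow> 'a::finite \<Rightarrow> real"
  assumes "is_policy \<pi>" "\<And>a. X a \<le> m"
  shows "(\<Sum>a\<in>UNIV. \<pi> s a * X a) \<le> m"
proof -
  have "(\<Sum>a\<in>UNIV. \<pi> s a * X a) \<le> (\<Sum>a\<in>UNIV. \<pi> s a * m)"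
    using assms by (intro sum_mono mult_left_mono) (auto simp: is_policy_def)
  also have "\<dots> = m" using assms by (simp add: is_policy_def flip: sum_distrib_right)
  finally show ?thesis .
qed

lemma conv_ge:
  fixes \<pi> :: "'s::finite \<Rightarrow> 'a::finite \<Rightarrow> real"
  assumes "is_policy \<pi>" "\<And>a. m \<le> X a"
  shows "m \<le> (\<Sum>a\<in>UNIV. \<pi> s a * X a)"
proof -
  have "(\<Sum>a\<in>UNIV. \<pi> s a * X a) \<ge> (\<Sum>a\<in>UNIV. \<pi> s a * m)"
    using assms by (intro sum_mono mult_left_mono) (auto simp: is_policy_def)
  moreover have "(\<Sum>a\<in>UNIV. \<pi> s a * m) = m" using assms by (simp add: is_policy_def flip: sum_distrib_right)
  ultimately show ?thesis by simp
qed

lemma kconv_le: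
  fixes P :: "'s::finite \<Rightarrow> 'a::finite \<Rightarrow> 's \<Rightarrow> real"
  assumes "is_kernel P" "\<And>s'. u$s' \<le> m"
  shows "(\<Sum>s'\<in>UNIV. P s a s' * u$s') \<le> m"
proof -
  have "(\<Sum>s'\<in>UNIV. P s a s' * u$s') \<le> (\<Sum>s'\<in>UNIV. P s a s' * m)"
    using assms by (intro sum_mono mult_left_mono) (auto simp: is_kernel_def)
  also have "\<dots> = m" using assms by (simp add: is_kernel_def flip: sum_distrib_right)
  finally show ?thesis .
qed

lemma kconv_ge:
  fixes P :: "'s::finite \<Rightarrow> 'a::finite \<Rightarrow> 's \<Rightarrow> real"
  assumes "is_kernel P" "\<And>s'. m \<le> u$s'"
  shows "m \<le> (\<Sum>s'\<in>UNIV. P s a s' * u$s')"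
proof -
  have "(\<Sum>s'\<in>UNIV. P s a s' * u$s') \<ge> (\<Sum>s'\<in>UNIV. P s a s' * m)"
    using assms by (intro sum_mono mult_left_mono) (auto simp: is_kernel_def)
  moreover have "(\<Sum>s'\<in>UNIV. P s a s' * m) = m" using assms by (simp add: is_kernel_def flip: sum_distrib_right)
  ultimately show ?thesis by simp
qed

lemma maxp:
  fixes P :: "'s::finite \<Rightarrow> 'a::finite \<Rightarrow> 's \<Rightarrow> real"
  assumes K: "is_kernel P" and pol: "is_policy \<pi>" and d: "0 \<le> d" "d < 1"
    and H: "\<And>s. u$s \<le> d * (\<Sum>a\<in>UNIV. \<pi> s a * (\<Sum>s'\<in>UNIV. P s a s' * u$s')) + c"
  shows "u$s \<le> c / (1 - d)"
proof -
  define m where "m = Max (range (\<lambda>s. u$s))"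
  have um: "\<And>s. u$s \<le> m" unfolding m_def by (intro Max_ge) auto
  have "m \<in> range (\<lambda>s. u$s)" unfolding m_def by (intro Max_in) auto
  then obtain s1 where s1: "u$s1 = m" by auto
  have "(\<Sum>a\<in>UNIV. \<pi> s1 a * (\<Sum>s'\<in>UNIV. P s1 a s' * u$s')) \<le> m"
    by (intro conv_le[OF pol] kconv_le[OF K] um)
  hence "d * (\<Sum>a\<in>UNIV. \<pi> s1 a * (\<Sum>s'\<in>UNIV. P s1 a s' * u$s')) \<le> d * m" using d by (intro mult_left_mono) auto
  hence "m \<le> d * m + c" using H[of s1] s1 by linarith
  hence "m * (1 - d) \<le> c" by (simp add: algebra_simps)
  hence "m \<le> c / (1 - d)" using d by (simp add: pos_le_divide_eq)
  thus ?thesis using um[of s] by simp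
qed

lemma minv: "invertible A \<Longrightarrow> A ** matrix_inv A = mat 1 \<and> matrix_inv A ** A = mat 1"
  unfolding invertible_def matrix_inv_def by (rule someI_ex)

lemma Amul: "((mat 1 - d *\<^sub>R M) *v v) $ s = v$s - d * (M *v v)$s"
  by (simp add: matrix_vector_mult_diff_rdistrib flip: scaleR_matrix_vector_assoc)

lemma inj_A:
  fixes P :: "'s::finite \<Rightarrow> 'a::finite \<Rightarrow> 's \<Rightarrow> real"
  assumes K: "is_kernel P" and pol: "is_policy \<pi>" and d: "0 \<le> d" "d < 1"
  shows "inj ((*v) (mat 1 - d *\<^sub>R pol_mat P \<pi>))"
proof (rule injI)
  fix x y :: "real^'s"
  assume "(mat 1 - d *\<^sub>R pol_mat P \<pi>) *v x = (mat 1 - d *\<^sub>R pol_mat P \<pi>) *v y"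
  hence "(mat 1 - d *\<^sub>R pol_mat P \<pi>) *v (x - y) = 0" by (simp add: matrix_vector_mult_diff_distrib)
  hence e0: "((mat 1 - d *\<^sub>R pol_mat P \<pi>) *v (x - y))$s = 0" for s by simp
  have e: "(x-y)$s = d * (\<Sum>a\<in>UNIV. \<pi> s a * (\<Sum>s'\<in>UNIV. P s a s' * (x-y)$s'))" for s
    using e0[of s] unfolding Amul pol_mat_mult by simp
  have 1: "(x-y)$s \<le> 0" for s
    using maxp[OF K pol d, of "x-y" 0] e by (metis add_0_right diff_0_right div_0 order_refl)
  from \<open>(mat 1 - d *\<^sub>R pol_mat P \<pi>) *v x = (mat 1 - d *\<^sub>R pol_mat P \<pi>) *v y\<close>
  have "(mat 1 - d *\<^sub>R pol_mat P \<pi>) *v (y - x) = 0" by (simp add: matrix_vector_mult_diff_distrib)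
  hence e20: "((mat 1 - d *\<^sub>R pol_mat P \<pi>) *v (y - x))$s = 0" for s by simp
  have e2: "(y-x)$s = d * (\<Sum>a\<in>UNIV. \<pi> s a * (\<Sum>s'\<in>UNIV. P s a s' * (y-x)$s'))" for s
    using e20[of s] unfolding Amul pol_mat_mult by simp
  have 2: "(y-x)$s \<le> 0" for s
    using maxp[OF K pol d, of "y-x" 0] e2 by (metis add_0_right diff_0_right div_0 order_refl)
  have "x$s = y$s" for s using 1[of s] 2[of s] by simp
  thus "x = y" by (simp add: vec_eq_iff)
qed

lemma inv_A:
  fixes P :: "'s::finite \<Rightarrow> 'a::finite \<Rightarrow> 's \<Rightarrow> real"
  assumes K: "is_kernel P" and pol: "is_policy \<pi>" and d: "0 \<le> d" "d < 1"
  shows "invertible (mat 1 - d *\<^sub>R pol_mat P \<pi>)"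
proof -
  obtain B where "B ** (mat 1 - d *\<^sub>R pol_mat P \<pi>) = mat 1"
    using inj_A[OF assms] matrix_left_invertible_injective by blast
  thus ?thesis unfolding invertible_def using matrix_left_right_inverse by blast
qed

lemma disc_eq:
  fixes P :: "'s::finite \<Rightarrow> 'a::finite \<Rightarrow> 's \<Rightarrow> real"
  assumes K: "is_kernel P" and pol: "is_policy \<pi>" and d: "0 \<le> d" "d < 1"
  shows "disc_value P r d \<pi> $ s = (\<Sum>a\<in>UNIV. \<pi> s a * Tq P r d (disc_value P r d \<pi>) s a)"
proof -
  let ?A = "mat 1 - d *\<^sub>R pol_mat P \<pi>"
  have "?A *v disc_value P r d \<pi> = pol_rew r \<pi>"
    using minv[OF inv_A[OF assms]] unfolding disc_value_def
    by (simp add: matrix_vector_mul_assoc)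
  hence "(?A *v disc_value P r d \<pi>) $ s = pol_rew r \<pi> $ s" by simp
  hence "pol_rew r \<pi> $ s = disc_value P r d \<pi> $ s - d * (pol_mat P \<pi> *v disc_value P r d \<pi>) $ s"
    unfolding Amul by simp
  thus ?thesis using pol_expand[of r \<pi> s d P "disc_value P r d \<pi>"] by linarith
qed

lemma disc_uniq:
  fixes P :: "'s::finite \<Rightarrow> 'a::finite \<Rightarrow> 's \<Rightarrow> real"
  assumes K: "is_kernel P" and pol: "is_policy \<pi>" and d: "0 \<le> d" "d < 1"
    and v: "\<And>s. v$s = (\<Sum>a\<in>UNIV. \<pi> s a * Tq P r d v s a)"
  shows "disc_value P r d \<pi> = v"
proof -
  let ?A = "mat 1 - d *\<^sub>R pol_mat P \<pi>"
  have "?A *v v = pol_rew r \<pi>"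
    unfolding vec_eq_iff
  proof
    fix s
    have "v$s = pol_rew r \<pi> $s + d * (pol_mat P \<pi> *v v)$s" using v[of s] pol_expand[of r \<pi> s d P v] by simp
    thus "(?A *v v)$s = pol_rew r \<pi> $ s" by (simp add: Amul)
  qed
  moreover have "?A *v disc_value P r d \<pi> = pol_rew r \<pi>"
    using minv[OF inv_A[OF K pol d]] unfolding disc_value_def
    by (simp add: matrix_vector_mul_assoc)
  ultimately have "?A *v disc_value P r d \<pi> = ?A *v v" by simp
  thus ?thesis by (rule injD[OF inj_A[OF K pol d]])
qed

definition detp :: "('s \<Rightarrow> 'a) \<Rightarrow> 's \<Rightarrow> 'a \<Rightarrow> real" where
  "detp f s a = (if a = f s then 1 else 0)"

lemma detp_pol: "is_policy (detp (f :: 's::finite \<Rightarrow> 'a::finite))"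
  unfolding is_policy_def detp_def by simp

lemma sum_detp: "(\<Sum>a\<in>UNIV. detp f s a * X a) = (X ((f::'s \<Rightarrow> 'a::finite) s) :: real)"
proof -
  have "(\<Sum>a\<in>UNIV. detp f s a * X a) = (\<Sum>a\<in>UNIV. if a = f s then X a else 0)"
    by (rule sum.cong) (auto simp: detp_def)
  also have "\<dots> = X (f s)" by simp
  finally show ?thesis .
qed

lemma ex_argmax:
  fixes F :: "'x::finite \<Rightarrow> real"
  shows "\<exists>x. \<forall>y. F y \<le> F x"
proof -
  have "Max (range F) \<in> range F" by (intro Max_in) auto
  then obtain x where "Max (range F) = F x" by blast
  moreover have "F y \<le> Max (range F)" for y by (rule Max_ge) auto
  ultimately show ?thesis by metis
qed

lemma Tq_diff: "Tq P r d v s a - Tq P r d w s a = d * (\<Sum>s'\<in>UNIV. P s a s' * (v - w)$s')"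
  by (simp add: Tq_def sum_subtractf right_diff_distrib)

lemma pol_diff: "(\<Sum>a\<in>UNIV. \<pi> s a * (X a::real)) - (\<Sum>a\<in>UNIV. \<pi> s a * Y a) = (\<Sum>a\<in>UNIV. \<pi> s a * (X a - Y a))"
  by (simp add: right_diff_distrib sum_subtractf)

lemma opt_det:
  fixes P :: "'s::finite \<Rightarrow> 'a::finite \<Rightarrow> 's \<Rightarrow> real"
  assumes K: "is_kernel P" and d: "0 \<le> d" "d < 1"
  shows "\<exists>f. (\<forall>s a. Tq P r d (disc_value P r d (detp f)) s a \<le> disc_value P r d (detp f) $ s) \<and>
     (\<forall>\<pi>. is_policy \<pi> \<longrightarrow> (\<forall>s. disc_value P r d \<pi> $ s \<le> disc_value P r d (detp f) $ s))"
proof -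
  define W where "W g = disc_value P r d (detp g)" for g
  have WE: "W g $ s = Tq P r d (W g) s (g s)" for g s
    unfolding W_def by (subst disc_eq[OF K detp_pol d]) (simp add: sum_detp)
  obtain f where fmax: "\<And>g. (\<Sum>s\<in>UNIV. W g $ s) \<le> (\<Sum>s\<in>UNIV. W f $ s)"
    using ex_argmax[of "\<lambda>g. \<Sum>s\<in>UNIV. W g $ s"] by blast
  have B: "Tq P r d (W f) s a \<le> W f $ s" for s a
  proof (rule ccontr)
    assume "\<not> ?thesis"
    hence gt: "Tq P r d (W f) s a > W f $ s" by simp
    define g where "g = f(s := a)"
    define q where "q t = Tq P r d (W f) t (g t) - W f $ t" for t
    have q0: "q t \<ge> 0" for t
      using gt WE[of f t] unfolding q_def g_def by (cases "t = s") auto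
    have qs: "q s > 0" using gt unfolding q_def g_def by simp
    have ue: "(W g - W f) $ t = q t + d * (\<Sum>s'\<in>UNIV. P t (g t) s' * (W g - W f)$s')" for t
    proof -
      have "(W g - W f) $ t = Tq P r d (W g) t (g t) - Tq P r d (W f) t (g t) + q t"
        using WE[of g t] unfolding q_def by simp
      thus ?thesis by (simp add: Tq_diff)
    qed
    have neg: "(W f - W g) $ t \<le> 0" for t
    proof (rule order_trans[OF maxp[OF K detp_pol[of g] d, of "W f - W g" 0]])
      fix t
      have "(\<Sum>s'\<in>UNIV. P t (g t) s' * (W f - W g)$s') = - (\<Sum>s'\<in>UNIV. P t (g t) s' * (W g - W f)$s')"
        by (simp add: sum_negf[symmetric] algebra_simps)
      hence "(W f - W g) $ t = - q t + d * (\<Sum>s'\<in>UNIV. P t (g t) s' * (W f - W g)$s')"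
        using ue[of t] by simp
      also have "\<dots> \<le> d * (\<Sum>s'\<in>UNIV. P t (g t) s' * (W f - W g)$s')" using q0[of t] by simp
      finally show "(W f - W g) $ t \<le> d * (\<Sum>a\<in>UNIV. detp g t a * (\<Sum>s'\<in>UNIV. P t a s' * (W f - W g)$s')) + 0"
        by (simp add: sum_detp)
    qed simp
    have pos: "(W g - W f) $ t \<ge> 0" for t using neg[of t] by simp
    have "(\<Sum>s'\<in>UNIV. P s (g s) s' * (W g - W f)$s') \<ge> 0"
      by (rule kconv_ge[OF K]) (use pos in auto)
    hence "(W g - W f) $ s > 0" using ue[of s] qs d by (smt (verit) mult_nonneg_nonneg)
    hence "(\<Sum>t\<in>UNIV. W f $ t) < (\<Sum>t\<in>UNIV. W g $ t)"
      by (intro sum_strict_mono_ex1) (use pos in auto)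
    thus False using fmax[of g] by simp
  qed
  have "disc_value P r d \<pi> $ s \<le> W f $ s" if pol: "is_policy \<pi>" for \<pi> s
  proof -
    define V where "V = disc_value P r d \<pi>"
    have "(V - W f) $ t \<le> d * (\<Sum>a\<in>UNIV. \<pi> t a * (\<Sum>s'\<in>UNIV. P t a s' * (V - W f)$s')) + 0" for t
    proof -
      have "W f $ t \<ge> (\<Sum>a\<in>UNIV. \<pi> t a * Tq P r d (W f) t a)" by (rule conv_le[OF pol B])
      moreover have "V $ t = (\<Sum>a\<in>UNIV. \<pi> t a * Tq P r d V t a)"
        unfolding V_def by (rule disc_eq[OF K pol d])
      ultimately have "(V - W f) $ t \<le> (\<Sum>a\<in>UNIV. \<pi> t a * Tq P r d V t a) - (\<Sum>a\<in>UNIV. \<pi> t a * Tq P r d (W f) t a)"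
        by simp
      also have "\<dots> = d * (\<Sum>a\<in>UNIV. \<pi> t a * (\<Sum>s'\<in>UNIV. P t a s' * (V - W f)$s'))"
        by (simp add: pol_diff Tq_diff sum_distrib_left mult.left_commute)
      finally show ?thesis by simp
    qed
    from maxp[OF K pol d, of "V - W f" 0, OF this] show ?thesis unfolding V_def by simp
  qed
  thus ?thesis using B unfolding W_def by blast
qed

lemma opt_val:
  fixes P :: "'s::finite \<Rightarrow> 'a::finite \<Rightarrow> 's \<Rightarrow> real"
  assumes "\<forall>\<pi>. is_policy \<pi> \<longrightarrow> (\<forall>s. disc_value P r d \<pi> $ s \<le> disc_value P r d (detp f) $ s)"
  shows "opt_disc_value P r d = disc_value P r d (detp f)"
  unfolding opt_disc_value_def vec_eq_iff
proof
  fix s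
  show "(\<chi> s. SUP \<pi>\<in>{\<pi>. is_policy \<pi>}. disc_value P r d \<pi> $ s) $ s = disc_value P r d (detp f) $ s"
    using assms detp_pol[of f] by (auto intro!: cSup_eq_maximum)
qed

lemma cesaro_tendsto:
  fixes X :: "nat \<Rightarrow> 'v::real_normed_vector"
  assumes X: "X \<longlonglongrightarrow> L"
  shows "(\<lambda>N. (1 / real N) *\<^sub>R (\<Sum>T<N. X T)) \<longlonglongrightarrow> L"
proof (rule LIMSEQ_I)
  fix e :: real assume e: "0 < e"
  obtain K where K: "\<And>T. T \<ge> K \<Longrightarrow> norm (X T - L) < e/2"
    using LIMSEQ_D[OF X, of "e/2"] e by auto
  define B where "B = (\<Sum>T<K. norm (X T - L))"
  have B0: "B \<ge> 0" unfolding B_def by (intro sum_nonneg) auto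
  define N0 where "N0 = max (K+1) (nat \<lceil>2*B/e\<rceil> + 1)"
  have "norm ((1 / real N) *\<^sub>R (\<Sum>T<N. X T) - L) < e" if N: "N \<ge> N0" for N
  proof -
    have N1: "N \<ge> 1" "N \<ge> K" using N unfolding N0_def by auto
    have NB: "real N > 2*B/e" using N unfolding N0_def by linarith
    have eq: "(1 / real N) *\<^sub>R (\<Sum>T<N. X T) - L = (1 / real N) *\<^sub>R (\<Sum>T<N. (X T - L))"
      using N1 by (simp add: sum_subtractf scaleR_diff_right sum_constant_scaleR)
    have split: "(\<Sum>T<N. norm (X T - L)) = B + (\<Sum>T\<in>{K..<N}. norm (X T - L))"
      unfolding B_def using N1 sum.atLeastLessThan_concat[of 0 K N "\<lambda>T. norm (X T - L)"]
      by (simp add: atLeast0LessThan)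
    have "(\<Sum>T\<in>{K..<N}. norm (X T - L)) \<le> real (card {K..<N}) * (e/2)"
      by (rule sum_bounded_above) (use K in \<open>fastforce intro: less_imp_le\<close>)
    also have "\<dots> \<le> real N * (e/2)" using e by (intro mult_right_mono) auto
    finally have S: "norm (\<Sum>T<N. (X T - L)) \<le> B + real N * (e/2)"
      using norm_sum[of "\<lambda>T. X T - L" "{..<N}"] split by linarith
    have "norm ((1 / real N) *\<^sub>R (\<Sum>T<N. X T) - L) = norm (\<Sum>T<N. (X T - L)) / real N"
      unfolding eq by simp
    also have "\<dots> \<le> (B + real N * (e/2)) / real N"
      using N1 S by (intro divide_right_mono) auto
    also have "\<dots> = B / real N + e/2" using N1 by (simp add: field_simps)
    also have "B / real N < e/2"
    proof -
      have "2*B/e < real N" by (rule NB)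
      hence "2*B < real N * e" using e by (simp add: divide_less_eq)
      thus ?thesis using N1 by (simp add: divide_less_eq mult.commute)
    qed
    finally show ?thesis by simp
  qed
  thus "\<exists>no. \<forall>n\<ge>no. norm ((1 / real n) *\<^sub>R (\<Sum>T<n. X T) - L) < e" by blast
qed

lemma mpow_comm: "mpow M t ** M = M ** mpow M t"
proof (induction t)
  case (Suc t)
  have "mpow M (Suc t) ** M = M ** (mpow M t ** M)" by (simp add: matrix_mul_assoc)
  also have "\<dots> = M ** mpow M (Suc t)" using Suc by simp
  finally show ?case .
qed simp

lemma mpow_vec_Suc: "mpow M (Suc t) *v x = M *v (mpow M t *v x)"
  by (simp add: matrix_vector_mul_assoc)

lemma anch_sum: "(\<Sum>s'\<in>UNIV. anchored n s0 P s a s' * h$s') = (1 - 1/real n) * (\<Sum>s'\<in>UNIV. P s a s' * h$s') + h$s0 / real n"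
proof -
  have "(\<Sum>s'\<in>UNIV. anchored n s0 P s a s' * h$s') = (\<Sum>s'\<in>UNIV. (1 - 1/real n) * (P s a s' * h$s') + (if s' = s0 then h$s0 / real n else 0))"
    unfolding anchored_def by (rule sum.cong) (auto simp: algebra_simps)
  also have "\<dots> = (1 - 1/real n) * (\<Sum>s'\<in>UNIV. P s a s' * h$s') + h$s0 / real n"
    by (simp add: sum.distrib sum_distrib_left)
  finally show ?thesis .
qed

lemma anch_kernel:
  assumes K: "is_kernel P" and n: "n \<ge> 1"
  shows "is_kernel (anchored n s0 P)"
proof -
  have g: "0 \<le> 1 - 1 / real n" using n by (simp add: field_simps)
  have "(\<Sum>s'\<in>UNIV. anchored n s0 P s a s') = 1" for s a
    using anch_sum[of n s0 P s a 1] K n by (simp add: is_kernel_def field_simps)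
  moreover have "0 \<le> anchored n s0 P s a s'" for s a s'
    using K g unfolding anchored_def is_kernel_def by auto
  ultimately show ?thesis unfolding is_kernel_def by blast
qed

lemma Q_mult:
  assumes pol: "is_policy \<pi>"
  shows "(pol_mat (anchored n s0 P) \<pi> *v y)$s = (1 - 1/real n) * (\<Sum>a\<in>UNIV. \<pi> s a * (\<Sum>s'\<in>UNIV. P s a s' * y$s')) + y$s0 / real n"
proof -
  have "(pol_mat (anchored n s0 P) \<pi> *v y)$s = (\<Sum>a\<in>UNIV. \<pi> s a * ((1 - 1/real n) * (\<Sum>s'\<in>UNIV. P s a s' * y$s')) + \<pi> s a * (y$s0 / real n))"
    unfolding pol_mat_mult anch_sum by (simp add: algebra_simps)
  also have "\<dots> = (1 - 1/real n) * (\<Sum>a\<in>UNIV. \<pi> s a * (\<Sum>s'\<in>UNIV. P s a s' * y$s')) + (\<Sum>a\<in>UNIV. \<pi> s a) * (y$s0 / real n)"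
    by (simp add: sum.distrib sum_distrib_left sum_distrib_right sum_divide_distrib algebra_simps)
  finally show ?thesis using pol unfolding is_policy_def by simp
qed

definition mxv :: "real^'s::finite \<Rightarrow> real" where "mxv y = Max (range (\<lambda>s. y$s))"
definition mnv :: "real^'s::finite \<Rightarrow> real" where "mnv y = Min (range (\<lambda>s. y$s))"

lemma mxv_ge: "y$s \<le> mxv y" unfolding mxv_def by (rule Max_ge) auto
lemma mnv_le: "mnv y \<le> y$s" unfolding mnv_def by (rule Min_le) auto
lemma mxv_le: "(\<And>s. y$s \<le> c) \<Longrightarrow> mxv y \<le> c" unfolding mxv_def by (subst Max_le_iff) auto
lemma mnv_ge: "(\<And>s. c \<le> y$s) \<Longrightarrow> c \<le> mnv y" unfolding mnv_def by (subst Min_ge_iff) auto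

lemma contr:
  fixes P :: "'s::finite \<Rightarrow> 'a::finite \<Rightarrow> 's \<Rightarrow> real" and y :: "real^'s" and s0 :: 's
  assumes K: "is_kernel P" and pol: "is_policy \<pi>" and n: "n \<ge> 1"
  defines "y' \<equiv> pol_mat (anchored n s0 P) \<pi> *v y"
  shows "mxv y' \<le> mxv y" "mnv y \<le> mnv y'" "mxv y' - mnv y' \<le> (1 - 1/real n) * (mxv y - mnv y)"
proof -
  define g where "g = 1 - 1/real n"
  have g: "0 \<le> g" "g + 1/real n = 1" using n unfolding g_def by (auto simp: field_simps)
  define A where "A s = (\<Sum>a\<in>UNIV. \<pi> s a * (\<Sum>s'\<in>UNIV. P s a s' * y$s'))" for s
  have A: "mnv y \<le> A s" "A s \<le> mxv y" for s
    unfolding A_def by (intro conv_ge[OF pol] conv_le[OF pol] kconv_ge[OF K] kconv_le[OF K] mnv_le mxv_ge)+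
  have ys: "y'$s = g * A s + y$s0 / real n" for s
    unfolding y'_def g_def A_def by (rule Q_mult[OF pol])
  have n0: "real n > 0" using n by simp
  have up: "y'$s \<le> g * mxv y + y$s0 / real n" for s
  proof -
    have "g * A s \<le> g * mxv y" using A[of s] g by (intro mult_left_mono) auto
    thus ?thesis using ys[of s] by linarith
  qed
  have lo: "y'$s \<ge> g * mnv y + y$s0 / real n" for s
  proof -
    have "g * A s \<ge> g * mnv y" using A[of s] g by (intro mult_left_mono) auto
    thus ?thesis using ys[of s] by linarith
  qed
  have split: "g * X + X / real n = X" for X
  proof -
    have "g * X + X / real n = (g + 1/real n) * X" by (simp add: algebra_simps)
    thus ?thesis using g(2) by simp
  qed
  have "y$s0 / real n \<le> mxv y / real n" using mxv_ge[of y s0] n0 by (simp add: divide_right_mono)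
  hence "y'$s \<le> mxv y" for s using up[of s] split[of "mxv y"] by linarith
  thus "mxv y' \<le> mxv y" by (rule mxv_le)
  have "y$s0 / real n \<ge> mnv y / real n" using mnv_le[of y s0] n0 by (simp add: divide_right_mono)
  hence "y'$s \<ge> mnv y" for s using lo[of s] split[of "mnv y"] by linarith
  thus "mnv y \<le> mnv y'" by (rule mnv_ge)
  have "mxv y' \<le> g * mxv y + y$s0 / real n" by (rule mxv_le[OF up])
  moreover have "mnv y' \<ge> g * mnv y + y$s0 / real n" by (rule mnv_ge[OF lo])
  ultimately show "mxv y' - mnv y' \<le> (1 - 1/real n) * (mxv y - mnv y)"
    unfolding g_def[symmetric] by (simp add: right_diff_distrib)
qed

lemma conv_const:
  fixes P :: "'s::finite \<Rightarrow> 'a::finite \<Rightarrow> 's \<Rightarrow> real"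
  assumes K: "is_kernel P" and pol: "is_policy \<pi>" and n: "n \<ge> 2"
  shows "\<exists>c. \<forall>s. (\<lambda>t. (mpow (pol_mat (anchored n s0 P) \<pi>) t *v x)$s) \<longlonglongrightarrow> c"
proof -
  define Qm where "Qm = pol_mat (anchored n s0 P) \<pi>"
  define y where "y t = mpow Qm t *v x" for t
  have ysuc: "y (Suc t) = Qm *v y t" for t unfolding y_def by (rule mpow_vec_Suc)
  define M where "M t = mxv (y t)" for t
  define m where "m t = mnv (y t)" for t
  define g where "g = 1 - 1/real n"
  have n1: "n \<ge> 1" using n by simp
  have g: "0 \<le> g" "g < 1" using n unfolding g_def by (auto simp: field_simps)
  have dec: "decseq M" unfolding decseq_Suc_iff M_def ysuc Qm_def using contr(1)[OF K pol n1] by blast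
  have inc: "incseq m" unfolding incseq_Suc_iff m_def ysuc Qm_def using contr(2)[OF K pol n1] by blast
  have gap: "M t - m t \<le> g^t * (M 0 - m 0)" for t
  proof (induction t)
    case (Suc t)
    have "M (Suc t) - m (Suc t) \<le> g * (M t - m t)"
      unfolding M_def m_def ysuc Qm_def g_def by (rule contr(3)[OF K pol n1])
    also have "\<dots> \<le> g * (g^t * (M 0 - m 0))" using Suc g by (intro mult_left_mono) auto
    finally show ?case by (simp add: mult.assoc)
  qed simp
  have mM: "m t \<le> y t $ s" "y t $ s \<le> M t" for t s
    unfolding m_def M_def by (rule mnv_le, rule mxv_ge)
  have "M t \<ge> m 0" for t using mM[of t] inc unfolding incseq_def by (meson order.trans le0)
  then obtain L where L: "M \<longlonglongrightarrow> L" using decseq_convergent[OF dec] by blast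
  have "(\<lambda>t. g^t * (M 0 - m 0)) \<longlonglongrightarrow> 0 * (M 0 - m 0)"
    using g by (intro tendsto_intros) auto
  hence gz: "(\<lambda>t. g^t * (M 0 - m 0)) \<longlonglongrightarrow> 0" by simp
  have gap0: "(\<lambda>t. M t - m t) \<longlonglongrightarrow> 0"
  proof (rule tendsto_sandwich[OF _ _ tendsto_const gz])
    have mM2: "m t \<le> M t" for t using mM(1)[of t undefined] mM(2)[of t undefined] by linarith
    show "\<forall>\<^sub>F t in sequentially. 0 \<le> M t - m t" by (intro always_eventually allI) (use mM2 in simp)
    show "\<forall>\<^sub>F t in sequentially. M t - m t \<le> g ^ t * (M 0 - m 0)" using gap by auto
  qed
  have mL: "m \<longlonglongrightarrow> L"
  proof -
    have "(\<lambda>t. M t - (M t - m t)) \<longlonglongrightarrow> L - 0" by (intro tendsto_diff L gap0)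
    thus ?thesis by simp
  qed
  have "(\<lambda>t. y t $ s) \<longlonglongrightarrow> L" for s
    by (rule tendsto_sandwich[OF _ _ mL L]) (use mM in auto)
  thus ?thesis unfolding y_def Qm_def by blast
qed

lemma col_entry: "(A *v axis j 1) $ i = (A::real^'n^'m) $ i $ j"
  by (simp add: matrix_vector_mult_basis column_def)

lemma mpow_const:
  assumes "\<And>y::real. M *v (\<chi> s. y) = (\<chi> s. y)"
  shows "mpow M t *v (\<chi> s. c) = (\<chi> s. c)"
  by (induction t) (simp_all add: matrix_vector_mul_assoc[symmetric] assms)

declare mpow.simps(2)[simp del]

lemma gain_bias:
  fixes P :: "'s::finite \<Rightarrow> 'a::finite \<Rightarrow> 's \<Rightarrow> real"
  assumes K: "is_kernel P" and pol: "is_policy \<pi>" and n: "n \<ge> 2"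
  shows "gain (anchored n s0 P) r \<pi> = (\<chi> s. disc_value P r (1 - 1/real n) \<pi> $ s0 / real n)"
    "\<exists>c. bias (anchored n s0 P) r \<pi> = disc_value P r (1 - 1/real n) \<pi> - (\<chi> s. c)"
proof -
  define g where "g = 1 - 1/real n"
  define W where "W = disc_value P r g \<pi>"
  define Qm where "Qm = pol_mat (anchored n s0 P) \<pi>"
  define \<rho> where "\<rho> = W$s0 / real n"
  have g: "0 \<le> g" "g < 1" using n unfolding g_def by (auto simp: field_simps)
  have WE: "W$s = pol_rew r \<pi> $ s + g * (\<Sum>a\<in>UNIV. \<pi> s a * (\<Sum>s'\<in>UNIV. P s a s' * W$s'))" for s
    using disc_eq[OF K pol g, of r s] pol_expand[of r \<pi> s g P W] unfolding W_def[symmetric] pol_mat_mult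
    by simp
  have rv: "pol_rew r \<pi> = W - Qm *v W + (\<chi> s. \<rho>)"
    unfolding vec_eq_iff
  proof
    fix s
    have "(Qm *v W)$s = g * (\<Sum>a\<in>UNIV. \<pi> s a * (\<Sum>s'\<in>UNIV. P s a s' * W$s')) + \<rho>"
      unfolding Qm_def Q_mult[OF pol] g_def \<rho>_def ..
    thus "pol_rew r \<pi> $ s = (W - Qm *v W + (\<chi> s. \<rho>)) $ s" using WE[of s] by simp
  qed
  have const: "Qm *v (\<chi> s. y) = (\<chi> s. y)" for y
  proof -
    have "(Qm *v (\<chi> s. y)) $ s = y" for s
    proof -
      have "(\<Sum>a\<in>UNIV. \<pi> s a * (\<Sum>s'\<in>UNIV. P s a s' * (\<chi> s. y)$s')) = y"
        using K pol by (simp add: is_kernel_def is_policy_def flip: sum_distrib_right)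
      thus ?thesis unfolding Qm_def Q_mult[OF pol] using n by (simp add: field_simps)
    qed
    thus ?thesis by (simp add: vec_eq_iff)
  qed
  have Qt: "mpow Qm t *v pol_rew r \<pi> = mpow Qm t *v W - mpow Qm (Suc t) *v W + (\<chi> s. \<rho>)" for t
  proof -
    have "mpow Qm t *v (Qm *v W) = mpow Qm (Suc t) *v W"
      by (simp add: matrix_vector_mul_assoc mpow_comm mpow.simps(2))
    thus ?thesis unfolding rv by (simp add: matrix_vector_mult_diff_distrib matrix_vector_right_distrib mpow_const[OF const])
  qed
  obtain cW where cW: "\<And>s. (\<lambda>t. (mpow Qm t *v W)$s) \<longlonglongrightarrow> cW"
    using conv_const[OF K pol n, of s0 W] unfolding Qm_def by blast
  have ex: "\<forall>j. \<exists>c. \<forall>i. (\<lambda>t. mpow Qm t $ i $ j) \<longlonglongrightarrow> c"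
  proof
    fix j
    show "\<exists>c. \<forall>i. (\<lambda>t. mpow Qm t $ i $ j) \<longlonglongrightarrow> c"
      using conv_const[OF K pol n, of s0 "axis j 1"] unfolding col_entry Qm_def by simp
  qed
  obtain cf where cf0: "\<forall>j. \<forall>i. (\<lambda>t. mpow Qm t $ i $ j) \<longlonglongrightarrow> cf j"
    using choice[OF ex] by blast
  hence cf: "\<And>i j. (\<lambda>t. mpow Qm t $ i $ j) \<longlonglongrightarrow> cf j" by blast
  define L :: "real^'s^'s" where "L = (\<chi> i j. cf j)"
  have Mlim: "(\<lambda>t. mpow Qm t) \<longlonglongrightarrow> L"
    by (intro vec_tendstoI) (simp add: L_def cf)
  have CL: "cesaro_lim (\<lambda>t. mpow Qm t) = L"
    unfolding cesaro_lim_def by (rule limI[OF cesaro_tendsto[OF Mlim]])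
  have G: "gain (anchored n s0 P) r \<pi> = L *v pol_rew r \<pi>"
    unfolding gain_def Qm_def[symmetric] CL ..
  have Lr: "(L *v pol_rew r \<pi>) $ s = \<rho>" for s
  proof -
    have e1: "(A *v v)$s = (\<Sum>j\<in>UNIV. A$s$j * v$j)" for A :: "real^'s^'s" and v
      by (simp add: matrix_vector_mult_def)
    have "(\<lambda>t. \<Sum>j\<in>UNIV. mpow Qm t $ s $ j * pol_rew r \<pi> $ j) \<longlonglongrightarrow> (\<Sum>j\<in>UNIV. L $ s $ j * pol_rew r \<pi> $ j)"
      by (intro tendsto_sum tendsto_mult_right tendsto_vec_nth Mlim)
    hence h1: "(\<lambda>t. (mpow Qm t *v pol_rew r \<pi>) $ s) \<longlonglongrightarrow> (L *v pol_rew r \<pi>) $ s"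
      unfolding e1 .
    have "(\<lambda>t. (mpow Qm t *v W)$s - (mpow Qm (Suc t) *v W)$s + \<rho>) \<longlonglongrightarrow> cW - cW + \<rho>"
      by (intro tendsto_add tendsto_diff cW LIMSEQ_Suc[OF cW] tendsto_const)
    moreover have "(mpow Qm t *v pol_rew r \<pi>) $ s = (mpow Qm t *v W)$s - (mpow Qm (Suc t) *v W)$s + \<rho>" for t
      by (simp only: Qt vector_add_component vector_minus_component vec_lambda_beta)
    ultimately have "(\<lambda>t. (mpow Qm t *v pol_rew r \<pi>) $ s) \<longlonglongrightarrow> \<rho>" by simp
    thus ?thesis using LIMSEQ_unique[OF h1] by simp
  qed
  have Gv: "gain (anchored n s0 P) r \<pi> = (\<chi> s. \<rho>)"
    unfolding G vec_eq_iff using Lr by simp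
  thus "gain (anchored n s0 P) r \<pi> = (\<chi> s. disc_value P r (1 - 1/real n) \<pi> $ s0 / real n)"
    unfolding \<rho>_def W_def g_def .
  have xT: "(\<Sum>t<T. mpow Qm t *v pol_rew r \<pi> - gain (anchored n s0 P) r \<pi>) = W - mpow Qm T *v W" for T
  proof -
    have "(\<Sum>t<T. mpow Qm t *v pol_rew r \<pi> - gain (anchored n s0 P) r \<pi>) = (\<Sum>t<T. mpow Qm t *v W - mpow Qm (Suc t) *v W)"
      unfolding Gv Qt by simp
    also have "\<dots> = W - mpow Qm T *v W"
      by (subst sum_lessThan_telescope') simp
    finally show ?thesis .
  qed
  have XL: "(\<lambda>T. \<Sum>t<T. mpow Qm t *v pol_rew r \<pi> - gain (anchored n s0 P) r \<pi>) \<longlonglongrightarrow> W - (\<chi> s. cW)"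
    unfolding xT by (intro vec_tendstoI) (simp, intro tendsto_intros cW)
  have "bias (anchored n s0 P) r \<pi> = W - (\<chi> s. cW)"
    unfolding bias_def cesaro_lim_def Qm_def[symmetric] by (rule limI[OF cesaro_tendsto[OF XL]])
  thus "\<exists>c. bias (anchored n s0 P) r \<pi> = disc_value P r (1 - 1/real n) \<pi> - (\<chi> s. c)"
    unfolding W_def g_def by blast
qed

lemma det_poly:
  fixes p :: "'n::finite \<Rightarrow> 'n \<Rightarrow> real poly"
  shows "\<exists>q. \<forall>x. det (\<chi> i j. poly (p i j) x) = poly q x"
proof
  let ?q = "\<Sum>\<sigma>\<in>{\<sigma>. \<sigma> permutes (UNIV::'n set)}. of_int (sign \<sigma>) * (\<Prod>i\<in>UNIV. p i (\<sigma> i))"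
  show "\<forall>x. det (\<chi> i j. poly (p i j) x) = poly ?q x"
    by (simp add: det_def poly_sum poly_prod)
qed

lemma rat_rep:
  fixes P :: "'s::finite \<Rightarrow> 'a::finite \<Rightarrow> 's \<Rightarrow> real"
  assumes K: "is_kernel P" and pol: "is_policy \<pi>"
  shows "\<exists>D N. (\<forall>s d. 0 \<le> d \<and> d < 1 \<longrightarrow> disc_value P r d \<pi> $ s * poly D d = poly (N s) d) \<and>
     (\<forall>d. 0 \<le> d \<and> d < 1 \<longrightarrow> poly D d > 0)"
proof -
  define M where "M = pol_mat P \<pi>"
  define pA where "pA i j = [: (if i = j then 1 else 0), - M$i$j :]" for i j
  have Aeq: "mat 1 - d *\<^sub>R M = (\<chi> i j. poly (pA i j) d)" for d
    unfolding pA_def by (simp add: vec_eq_iff mat_def)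
  obtain D where D: "\<And>d. det (\<chi> i j. poly (pA i j) d) = poly D d"
    using det_poly[of pA] by blast
  have "\<forall>k. \<exists>q. \<forall>d. det (\<chi> i j. poly (if j = k then [: pol_rew r \<pi> $ i :] else pA i j) d) = poly q d"
  proof
    fix k
    show "\<exists>q. \<forall>d. det (\<chi> i j. poly (if j = k then [: pol_rew r \<pi> $ i :] else pA i j) d) = poly q d"
      using det_poly[of "\<lambda>i j. if j = k then [: pol_rew r \<pi> $ i :] else pA i j"] by simp
  qed
  from choice[OF this] obtain N where N0: "\<forall>k d. det (\<chi> i j. poly (if j = k then [: pol_rew r \<pi> $ i :] else pA i j) d) = poly (N k) d"
    by blast
  hence N: "\<And>k d. det (\<chi> i j. poly (if j = k then [: pol_rew r \<pi> $ i :] else pA i j) d) = poly (N k) d"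
    by blast
  have nz: "poly D d \<noteq> 0" if "0 \<le> d" "d < 1" for d
    using inv_A[OF K pol that] unfolding invertible_det_nz M_def[symmetric] Aeq D .
  have D0: "poly D 0 = 1" using D[of 0] Aeq[of 0] by (metis det_I scale_zero_left diff_zero)
  have pos: "poly D d > 0" if d: "0 \<le> d" "d < 1" for d
  proof (rule ccontr)
    assume "\<not> ?thesis"
    hence neg: "poly D d < 0" using nz[OF d] by simp
    hence "d \<noteq> 0" using D0 by auto
    hence "0 < d" using d by simp
    from poly_IVT_neg[OF this _ neg] D0 obtain x where "0 < x" "x < d" "poly D x = 0" by auto
    thus False using nz[of x] d by simp
  qed
  have rep: "disc_value P r d \<pi> $ s * poly D d = poly (N s) d" if d: "0 \<le> d" "d < 1" for s d
  proof -
    have "(mat 1 - d *\<^sub>R M) *v disc_value P r d \<pi> = pol_rew r \<pi>"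
      using minv[OF inv_A[OF K pol d]] unfolding disc_value_def M_def
      by (simp add: matrix_vector_mul_assoc)
    hence "disc_value P r d \<pi> = (\<chi> k. det(\<chi> i j. if j=k then pol_rew r \<pi>$i else (mat 1 - d *\<^sub>R M)$i$j) / det (mat 1 - d *\<^sub>R M))"
      using cramer[of "mat 1 - d *\<^sub>R M"] nz[OF d] unfolding Aeq D by blast
    hence "disc_value P r d \<pi> $ s * det (mat 1 - d *\<^sub>R M) = det(\<chi> i j. if j=s then pol_rew r \<pi>$i else (mat 1 - d *\<^sub>R M)$i$j)"
      using nz[OF d] unfolding Aeq D by simp
    moreover have "(\<chi> i j. if j=s then pol_rew r \<pi>$i else (mat 1 - d *\<^sub>R M)$i$j) = (\<chi> i j. poly (if j = s then [: pol_rew r \<pi> $ i :] else pA i j) d)"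
      unfolding Aeq by (simp add: vec_eq_iff)
    ultimately show ?thesis using N[of s d] unfolding Aeq D by simp
  qed
  show ?thesis using rep pos by blast
qed

lemma cmp_poly:
  fixes P :: "'s::finite \<Rightarrow> 'a::finite \<Rightarrow> 's \<Rightarrow> real"
  assumes K: "is_kernel P" and pol1: "is_policy \<pi>1" and pol2: "is_policy \<pi>2"
  shows "\<exists>R. \<forall>d. 0 \<le> d \<and> d < 1 \<longrightarrow> (\<exists>C>0. poly R d = (disc_value P r d \<pi>1 $ s - disc_value P r d \<pi>2 $ s) * C)"
proof -
  obtain D1 N1 where 1: "\<And>s d. 0 \<le> d \<Longrightarrow> d < 1 \<Longrightarrow> disc_value P r d \<pi>1 $ s * poly D1 d = poly (N1 s) d"
    "\<And>d. 0 \<le> d \<Longrightarrow> d < 1 \<Longrightarrow> poly D1 d > 0"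
    using rat_rep[OF K pol1, of r] by blast
  obtain D2 N2 where 2: "\<And>s d. 0 \<le> d \<Longrightarrow> d < 1 \<Longrightarrow> disc_value P r d \<pi>2 $ s * poly D2 d = poly (N2 s) d"
    "\<And>d. 0 \<le> d \<Longrightarrow> d < 1 \<Longrightarrow> poly D2 d > 0"
    using rat_rep[OF K pol2, of r] by blast
  have "0 \<le> d \<Longrightarrow> d < 1 \<Longrightarrow> poly (N1 s * D2 - N2 s * D1) d = (disc_value P r d \<pi>1 $ s - disc_value P r d \<pi>2 $ s) * (poly D1 d * poly D2 d) \<and> poly D1 d * poly D2 d > 0" for d
    using 1(1)[of d s] 1(2)[of d] 2(1)[of d s] 2(2)[of d] by (auto simp: algebra_simps)
  thus ?thesis by blast
qed

lemma blackwell_ex: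
  fixes P :: "'s::finite \<Rightarrow> 'a::finite \<Rightarrow> 's \<Rightarrow> real"
  assumes K: "is_kernel P" and g0: "0 < g0" "g0 < 1"
  shows "\<exists>f d0. 0 \<le> d0 \<and> d0 < g0 \<and> (\<forall>d. d0 < d \<and> d \<le> g0 \<longrightarrow>
     (\<forall>\<pi>. is_policy \<pi> \<longrightarrow> (\<forall>s. disc_value P r d \<pi> $ s \<le> disc_value P r d (detp f) $ s)))"
proof -
  define W where "W d f = disc_value P r d (detp f)" for d f
  have "\<forall>fgs. \<exists>R. \<forall>d. 0 \<le> d \<and> d < 1 \<longrightarrow> (\<exists>C>0. poly R d = (W d (fst fgs) $ snd (snd fgs) - W d (fst (snd fgs)) $ snd (snd fgs)) * C)"
    unfolding W_def using cmp_poly[OF K detp_pol detp_pol] by blast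
  from choice[OF this] obtain R where R0: "\<forall>fgs d. 0 \<le> d \<and> d < 1 \<longrightarrow> (\<exists>C>0. poly (R fgs) d = (W d (fst fgs) $ snd (snd fgs) - W d (fst (snd fgs)) $ snd (snd fgs)) * C)"
    by blast
  have R: "\<And>f g s d. 0 \<le> d \<Longrightarrow> d < 1 \<Longrightarrow> \<exists>C>0. poly (R (f,g,s)) d = (W d f $ s - W d g $ s) * C"
    using R0 by fastforce
  define Z where "Z = (\<Union>fgs\<in>{fgs. R fgs \<noteq> 0}. {x. poly (R fgs) x = 0})"
  have "finite Z" unfolding Z_def by (intro finite_UN_I) (auto intro: poly_roots_finite)
  define Zs where "Zs = insert 0 {x\<in>Z. x < g0}"
  have fZs: "finite Zs" using \<open>finite Z\<close> unfolding Zs_def by auto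
  define d0 where "d0 = Max Zs"
  have d0: "0 \<le> d0" "d0 < g0" unfolding d0_def using fZs g0 by (auto simp: Zs_def)
  have noroot: "poly (R fgs) x \<noteq> 0" if "R fgs \<noteq> 0" "d0 < x" "x < g0" for fgs x
  proof
    assume "poly (R fgs) x = 0"
    hence "x \<in> Z" unfolding Z_def using that(1) by blast
    hence "x \<in> Zs" unfolding Zs_def using that(3) by blast
    hence "x \<le> d0" unfolding d0_def using fZs by auto
    thus False using that by simp
  qed
  define d1 where "d1 = (d0 + g0) / 2"
  have d1: "d0 < d1" "d1 < g0" "0 \<le> d1" "d1 < 1" using d0 g0 unfolding d1_def by auto
  obtain f where f: "\<And>\<pi> s. is_policy \<pi> \<Longrightarrow> disc_value P r d1 \<pi> $ s \<le> W d1 f $ s"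
    using opt_det[OF K d1(3,4), of r] unfolding W_def by blast
  have fg: "W d g $ s \<le> W d f $ s" if d: "d0 < d" "d \<le> g0" for g s d
  proof -
    have dd: "0 \<le> d" "d < 1" using d d0 g0 by auto
    obtain C where C: "C > 0" "poly (R (f,g,s)) d = (W d f $ s - W d g $ s) * C"
      using R[OF dd] by blast
    obtain C1 where C1: "C1 > 0" "poly (R (f,g,s)) d1 = (W d1 f $ s - W d1 g $ s) * C1"
      using R[OF d1(3,4)] by blast
    have "poly (R (f,g,s)) d \<ge> 0"
    proof (cases "R (f,g,s) = 0")
      case False
      have "W d1 g $ s \<le> W d1 f $ s" using f[OF detp_pol, of g s] unfolding W_def .
      hence "poly (R (f,g,s)) d1 \<ge> 0" using C1 by simp
      moreover have "poly (R (f,g,s)) d1 \<noteq> 0" using noroot[OF False d1(1,2)] .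
      ultimately have p1: "poly (R (f,g,s)) d1 > 0" by simp
      show ?thesis
      proof (rule ccontr)
        assume "\<not> ?thesis"
        hence neg: "poly (R (f,g,s)) d < 0" by simp
        have "d \<noteq> d1" using neg p1 by auto
        hence "d < d1 \<or> d1 < d" by auto
        thus False
        proof
          assume "d < d1"
          from poly_IVT_pos[OF this neg p1] obtain x where "d < x" "x < d1" "poly (R (f,g,s)) x = 0" by blast
          thus False using noroot[OF False, of x] d d1 by simp
        next
          assume "d1 < d"
          from poly_IVT_neg[OF this p1 neg] obtain x where "d1 < x" "x < d" "poly (R (f,g,s)) x = 0" by blast
          thus False using noroot[OF False, of x] d d1 by simp
        qed
      qed
    qed simp
    thus ?thesis using C by (simp add: zero_le_mult_iff)
  qed
  have "disc_value P r d \<pi> $ s \<le> disc_value P r d (detp f) $ s"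
    if d: "d0 < d" "d \<le> g0" and pol: "is_policy \<pi>" for d \<pi> s
  proof -
    have dd: "0 \<le> d" "d < 1" using d d0 g0 by auto
    obtain h where h: "\<forall>\<pi>. is_policy \<pi> \<longrightarrow> (\<forall>s. disc_value P r d \<pi> $ s \<le> disc_value P r d (detp h) $ s)"
      using opt_det[OF K dd, of r] by blast
    thus ?thesis using fg[OF d, of h s] pol unfolding W_def by (meson order_trans)
  qed
  thus ?thesis using d0 by blast
qed

lemma discQ:
  fixes P :: "'s::finite \<Rightarrow> 'a::finite \<Rightarrow> 's \<Rightarrow> real"
  assumes K: "is_kernel P" and pol: "is_policy \<pi>" and n: "n \<ge> 2" and b: "0 \<le> b" "b < 1"
  shows "disc_value (anchored n s0 P) r b \<pi> = disc_value P r (b * (1 - 1/real n)) \<pi> + (\<chi> s. b / (real n * (1 - b)) * disc_value P r (b * (1 - 1/real n)) \<pi> $ s0)"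
proof -
  define g where "g = 1 - 1/real n"
  define W where "W = disc_value P r (b*g) \<pi>"
  define c where "c = b / (real n * (1 - b))"
  have n0: "real n > 0" "real n \<ge> 2" using n by auto
  have g: "0 \<le> g" "g \<le> 1" unfolding g_def using n0 by (auto simp: field_simps)
  have "b*g \<le> b" using b g by (simp add: mult_left_le)
  hence bg: "0 \<le> b*g" "b*g < 1" using b g by auto
  have c1: "c * (1 - b) = b / real n" unfolding c_def using b n0 by simp
  have c2: "b*g*c + b*(1+c)/real n = b*c + b/real n" unfolding g_def using n0 by (simp add: field_simps)
  have cid: "b*g*c + b*(1+c)/real n = c" using c1 c2 by (simp add: algebra_simps)
  define v where "v = W + (\<chi> s. c * W$s0)"
  have v: "v$s = (\<Sum>a\<in>UNIV. \<pi> s a * Tq (anchored n s0 P) r b v s a)" for s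
  proof -
    have Ps: "(\<Sum>s'\<in>UNIV. P s a s' * v$s') = (\<Sum>s'\<in>UNIV. P s a s' * W$s') + c * W$s0" for a
    proof -
      have "(\<Sum>s'\<in>UNIV. P s a s' * v$s') = (\<Sum>s'\<in>UNIV. P s a s' * W$s') + (\<Sum>s'\<in>UNIV. P s a s') * (c * W$s0)"
        unfolding v_def by (simp add: algebra_simps sum.distrib sum_distrib_right sum_distrib_left)
      thus ?thesis using K unfolding is_kernel_def by simp
    qed
    have Tv: "Tq (anchored n s0 P) r b v s a = Tq P r (b*g) W s a + c * W$s0" for a
    proof -
      have "Tq (anchored n s0 P) r b v s a = r s a + b * (g * ((\<Sum>s'\<in>UNIV. P s a s' * W$s') + c * W$s0) + (1+c) * W$s0 / real n)"
        unfolding Tq_def anch_sum Ps g_def by (simp add: v_def algebra_simps)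
      also have "\<dots> = Tq P r (b*g) W s a + (b*g*c + b*(1+c)/real n) * W$s0"
        unfolding Tq_def by (simp add: algebra_simps)
      finally show ?thesis unfolding cid .
    qed
    have "(\<Sum>a\<in>UNIV. \<pi> s a * Tq (anchored n s0 P) r b v s a) = (\<Sum>a\<in>UNIV. \<pi> s a * Tq P r (b*g) W s a) + (\<Sum>a\<in>UNIV. \<pi> s a) * (c * W$s0)"
      unfolding Tv by (simp add: algebra_simps sum.distrib sum_distrib_right sum_distrib_left)
    also have "\<dots> = W$s + c * W$s0"
      using pol disc_eq[OF K pol bg, of r s] unfolding is_policy_def W_def by simp
    finally show ?thesis unfolding v_def by simp
  qed
  have "disc_value (anchored n s0 P) r b \<pi> = v"
    by (rule disc_uniq[OF anch_kernel[OF K] pol b v]) (use n in simp)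
  thus ?thesis unfolding v_def W_def c_def g_def .
qed

lemma bw:
  fixes P :: "'s::finite \<Rightarrow> 'a::finite \<Rightarrow> 's \<Rightarrow> real"
  assumes K: "is_kernel P" and n: "n \<ge> 2"
  shows "is_policy (SOME \<pi>. blackwell_optimal (anchored n s0 P) r \<pi>)"
    "disc_value P r (1 - 1/real n) (SOME \<pi>. blackwell_optimal (anchored n s0 P) r \<pi>) = opt_disc_value P r (1 - 1/real n)"
proof -
  define g where "g = 1 - 1/real n"
  have n0: "real n \<ge> 2" using n by simp
  have g: "0 < g" "g < 1" unfolding g_def using n0 by (auto simp: field_simps)
  obtain f d0 where d0: "0 \<le> d0" "d0 < g" and
    fopt: "\<And>d \<pi> s. d0 < d \<Longrightarrow> d \<le> g \<Longrightarrow> is_policy \<pi> \<Longrightarrow> disc_value P r d \<pi> $ s \<le> disc_value P r d (detp f) $ s"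
    using blackwell_ex[OF K g, of r] by blast
  define cc where "cc b = b / (real n * (1 - b))" for b
  have cc0: "cc b \<ge> 0" if "0 \<le> b" "b < 1" for b unfolding cc_def using that n0 by simp
  have dQ: "disc_value (anchored n s0 P) r b \<pi> $ s = disc_value P r (b*g) \<pi> $ s + cc b * disc_value P r (b*g) \<pi> $ s0"
    if "is_policy \<pi>" "0 \<le> b" "b < 1" for \<pi> b s
    using discQ[OF K that(1) n that(2,3), of s0 r] unfolding cc_def g_def by simp
  have "blackwell_optimal (anchored n s0 P) r (detp f)"
    unfolding blackwell_optimal_def
  proof (intro conjI detp_pol exI[of _ "d0 / g"] allI impI)
    show "d0 / g < 1" using d0 g by simp
    fix b :: real and \<pi>' :: "'s \<Rightarrow> 'a \<Rightarrow> real" and s :: 's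
    assume b: "d0 / g < b \<and> b < 1" and pol': "is_policy \<pi>'"
    have "0 \<le> d0 / g" using d0 g by simp
    hence b0: "0 \<le> b" using b by linarith
    have bg1: "d0 < b*g" using b g by (simp add: divide_less_eq)
    have "b*g \<le> 1*g" using b g by (intro mult_right_mono) auto
    hence bg: "d0 < b*g" "b*g \<le> g" using bg1 by auto
    have "cc b * disc_value P r (b*g) \<pi>' $ s0 \<le> cc b * disc_value P r (b*g) (detp f) $ s0"
      using fopt[OF bg pol', of s0] cc0[OF b0] b by (intro mult_left_mono) auto
    hence "disc_value P r (b*g) \<pi>' $ s + cc b * disc_value P r (b*g) \<pi>' $ s0 \<le>
          disc_value P r (b*g) (detp f) $ s + cc b * disc_value P r (b*g) (detp f) $ s0"
      using fopt[OF bg pol', of s] by linarith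
    thus "disc_value (anchored n s0 P) r b \<pi>' $ s \<le> disc_value (anchored n s0 P) r b (detp f) $ s"
      using dQ[OF pol' b0 conjunct2[OF b], where s=s] dQ[OF detp_pol[of f] b0 conjunct2[OF b], where s=s] by linarith
  qed
  hence BW: "blackwell_optimal (anchored n s0 P) r (SOME \<pi>. blackwell_optimal (anchored n s0 P) r \<pi>)"
    by (rule someI[where P="\<lambda>\<pi>. blackwell_optimal (anchored n s0 P) r \<pi>"])
  define bb where "bb = (SOME \<pi>. blackwell_optimal (anchored n s0 P) r \<pi>)"
  have BW2: "is_policy bb \<and> (\<exists>\<gamma>0<1. \<forall>\<gamma>. \<gamma>0 < \<gamma> \<and> \<gamma> < 1 \<longrightarrow>
        (\<forall>\<pi>'. is_policy \<pi>' \<longrightarrow> (\<forall>s. disc_value (anchored n s0 P) r \<gamma> \<pi>' $ s \<le> disc_value (anchored n s0 P) r \<gamma> bb $ s)))"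
  proof -
    have "blackwell_optimal (anchored n s0 P) r bb" using BW unfolding bb_def .
    thus ?thesis unfolding blackwell_optimal_def .
  qed
  hence polb: "is_policy bb" by (rule conjunct1)
  thus "is_policy (SOME \<pi>. blackwell_optimal (anchored n s0 P) r \<pi>)" unfolding bb_def .
  from BW2 obtain b0 where b0: "b0 < 1" and b0all: "\<forall>\<gamma>. b0 < \<gamma> \<and> \<gamma> < 1 \<longrightarrow>
        (\<forall>\<pi>'. is_policy \<pi>' \<longrightarrow> (\<forall>s. disc_value (anchored n s0 P) r \<gamma> \<pi>' $ s \<le> disc_value (anchored n s0 P) r \<gamma> bb $ s))"
    by (elim conjE exE) (rule that)
  have b0opt: "disc_value (anchored n s0 P) r b \<pi>' $ s \<le> disc_value (anchored n s0 P) r b bb $ s"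
    if "b0 < b" "b < 1" "is_policy \<pi>'" for b \<pi>' s
    using b0all that by blast
  define b1 where "b1 = max b0 (d0 / g)"
  have b1: "b1 < 1" "b0 \<le> b1" "d0 / g \<le> b1" using b0 d0 g unfolding b1_def by auto
  have eqS: "disc_value P r d bb $ s = disc_value P r d (detp f) $ s" if d: "b1 * g < d" "d < g" for d s
  proof -
    define b where "b = d / g"
    have bd: "b * g = d" unfolding b_def using g by simp
    have bb1: "b1 < b" "b < 1" unfolding b_def using d g by (simp_all add: less_divide_eq divide_less_eq)
    have "0 \<le> d0 / g" using d0 g by simp
    hence bpos: "0 \<le> b" using bb1 b1 by linarith
    have dd: "d0 < d" "d \<le> g"
    proof -
      have "d0 / g * g \<le> b1 * g" using b1 g by (intro mult_right_mono) auto
      thus "d0 < d" using g d by simp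
    qed (use d in simp)
    have le: "disc_value P r d bb $ t \<le> disc_value P r d (detp f) $ t" for t
      by (rule fopt[OF dd polb])
    have "disc_value (anchored n s0 P) r b (detp f) $ s \<le> disc_value (anchored n s0 P) r b bb $ s"
      by (rule b0opt) (use bb1 b1 detp_pol in auto)
    hence "disc_value P r d (detp f) $ s + cc b * disc_value P r d (detp f) $ s0 \<le>
       disc_value P r d bb $ s + cc b * disc_value P r d bb $ s0"
      using dQ[OF detp_pol bpos bb1(2)] dQ[OF polb bpos bb1(2)] unfolding bd by simp
    moreover have "cc b * disc_value P r d bb $ s0 \<le> cc b * disc_value P r d (detp f) $ s0"
      using le[of s0] cc0[OF bpos bb1(2)] by (intro mult_left_mono) auto
    ultimately show ?thesis using le[of s] by simp
  qed
  have gg: "0 \<le> g" "g < 1" using g by auto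
  have "disc_value P r g bb $ s = disc_value P r g (detp f) $ s" for s
  proof -
    obtain R where R: "\<And>d. 0 \<le> d \<Longrightarrow> d < 1 \<Longrightarrow> \<exists>C>0. poly R d = (disc_value P r d bb $ s - disc_value P r d (detp f) $ s) * C"
      using cmp_poly[OF K polb detp_pol, of r s] by blast
    have sub: "{b1*g<..<g} \<subseteq> {x. poly R x = 0}"
    proof
      fix x assume x: "x \<in> {b1*g<..<g}"
      have "0 \<le> d0 / g" using d0 g by simp
      hence "0 \<le> b1 * g" using b1 g by simp
      hence x0: "0 \<le> x" "x < 1" using x g by auto
      obtain C where "poly R x = (disc_value P r x bb $ s - disc_value P r x (detp f) $ s) * C"
        using R[OF x0] by blast
      thus "x \<in> {x. poly R x = 0}" using eqS[of x s] x by simp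
    qed
    have "b1 * g < g" using b1 g by simp
    hence "infinite {x. poly R x = 0}" using sub infinite_Ioo finite_subset by blast
    hence "R = 0" using poly_roots_finite by blast
    then obtain C where "C > 0" "0 = (disc_value P r g bb $ s - disc_value P r g (detp f) $ s) * C"
      using R[OF gg] by auto
    thus ?thesis by simp
  qed
  hence "disc_value P r g bb = disc_value P r g (detp f)" by (simp add: vec_eq_iff)
  also have "\<dots> = opt_disc_value P r g"
    by (rule opt_val[symmetric]) (use fopt d0 g in auto)
  finally show "disc_value P r (1 - 1/real n) (SOME \<pi>. blackwell_optimal (anchored n s0 P) r \<pi>) = opt_disc_value P r (1 - 1/real n)"
    unfolding bb_def g_def .
qed

lemma mxv_in: "\<exists>s. y$s = mxv y"
proof -
  have "mxv y \<in> range (\<lambda>s. y$s)" unfolding mxv_def by (intro Max_in) auto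
  thus ?thesis by auto
qed

lemma mnv_in: "\<exists>s. y$s = mnv y"
proof -
  have "mnv y \<in> range (\<lambda>s. y$s)" unfolding mnv_def by (intro Min_in) auto
  thus ?thesis by auto
qed

lemma sup_norm_le: "(\<And>s. \<bar>v$s\<bar> \<le> c) \<Longrightarrow> sup_norm v \<le> c"
  unfolding sup_norm_def by (subst Max_le_iff) auto

lemma sup_norm_ge: "\<bar>v$s\<bar> \<le> sup_norm v"
  unfolding sup_norm_def by (rule Max_ge) auto

lemma sp_norm_eq: "sp_norm v = mxv v - mnv v"
  unfolding sp_norm_def mxv_def mnv_def ..

lemma sp_norm_le: "(\<And>s t. v$s - v$t \<le> c) \<Longrightarrow> sp_norm v \<le> c"
  unfolding sp_norm_eq using mxv_in[of v] mnv_in[of v] by metis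

lemma sp_norm_ge: "v$s - v$t \<le> sp_norm v"
  unfolding sp_norm_eq using mxv_ge[of v s] mnv_le[of v t] by simp

theorem mainTheorem19:
  fixes P :: "'s::finite \<Rightarrow> 'a::finite \<Rightarrow> 's \<Rightarrow> real"
    and r :: "'s \<Rightarrow> 'a \<Rightarrow> real"
    and n :: nat and s0 :: 's
    and \<pi> :: "'s \<Rightarrow> 'a \<Rightarrow> real"
  assumes kernel: "is_kernel P"
    and rew: "\<forall>s a. 0 \<le> r s a \<and> r s a \<le> 1"
    and n2: "n \<ge> 2"
    and pol: "is_policy \<pi>"
  shows "(((\<exists>h. greedy \<pi> (\<lambda>s a. r s a + (\<Sum>s'\<in>UNIV. anchored n s0 P s a s' * h $ s'))
                \<and> sp_norm (opt_bias (anchored n s0 P) r - h) \<le> 1 / real n ^ 2)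
          \<or> (\<forall>s. bellman (anchored n s0 P) r (bias (anchored n s0 P) r \<pi>) $ s
                 \<le> bias (anchored n s0 P) r \<pi> $ s + gain (anchored n s0 P) r \<pi> $ s + 1 / real n ^ 2)
          \<or> ((\<forall>s. gain (anchored n s0 P) r \<pi> $ s \<ge> opt_gain (anchored n s0 P) r $ s - 1 / (3 * real n ^ 2))
             \<and> sup_norm (bias (anchored n s0 P) r \<pi> - opt_bias (anchored n s0 P) r) \<le> 1 / (3 * real n ^ 2)))
         \<longrightarrow> sup_norm (opt_disc_value P r (1 - 1 / real n) - disc_value P r (1 - 1 / real n) \<pi>) \<le> 1 / real n)
       \<and> (sup_norm (opt_disc_value P r (1 - 1 / real n) - disc_value P r (1 - 1 / real n) \<pi>) \<le> 1 / real n
          \<longrightarrow> (\<forall>s. gain (anchored n s0 P) r \<pi> $ s \<ge> opt_gain (anchored n s0 P) r $ s - 1 / real n ^ 2)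
              \<and> sp_norm (bias (anchored n s0 P) r \<pi> - opt_bias (anchored n s0 P) r) \<le> 2 / real n)"
proof -
  define g where "g = 1 - 1/real n"
  define Q where "Q = anchored n s0 P"
  define W where "W = disc_value P r g \<pi>"
  define Vs where "Vs = opt_disc_value P r g"
  have n0: "real n \<ge> 2" using n2 by simp
  have g: "0 \<le> g" "g < 1" unfolding g_def using n0 by (auto simp: field_simps)
  have g1: "1 - g = 1 / real n" unfolding g_def by simp
  obtain f where fB: "\<And>s a. Tq P r g (disc_value P r g (detp f)) s a \<le> disc_value P r g (detp f) $ s"
    and fopt: "\<And>\<pi>' s. is_policy \<pi>' \<Longrightarrow> disc_value P r g \<pi>' $ s \<le> disc_value P r g (detp f) $ s"
    using opt_det[OF kernel g, of r] by blast
  have Vsf0: "Vs = disc_value P r g (detp f)" unfolding Vs_def by (rule opt_val) (use fopt in blast)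
  have VsB: "Tq P r g Vs s a \<le> Vs $ s" for s a unfolding Vsf0 by (rule fB)
  have Vsf: "Vs $ s = Tq P r g Vs s (f s)" for s
    unfolding Vsf0 by (subst disc_eq[OF kernel detp_pol g]) (simp add: sum_detp)
  have WVs: "W $ s \<le> Vs $ s" for s unfolding W_def Vsf0 by (rule fopt[OF pol])
  have WE: "W $ s = (\<Sum>a\<in>UNIV. \<pi> s a * Tq P r g W s a)" for s
    unfolding W_def by (rule disc_eq[OF kernel pol g])
  have gainp: "gain Q r \<pi> = (\<chi> s. W $ s0 / real n)"
    unfolding Q_def W_def g_def by (rule gain_bias(1)[OF kernel pol n2])
  obtain cp where biasp: "bias Q r \<pi> = W - (\<chi> s. cp)"
    using gain_bias(2)[OF kernel pol n2, of s0 r] unfolding Q_def W_def g_def by blast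
  define bb where "bb = (SOME \<pi>. blackwell_optimal (anchored n s0 P) r \<pi>)"
  have polb: "is_policy bb" unfolding bb_def by (rule bw(1)[OF kernel n2])
  have Vsb: "disc_value P r g bb = Vs" unfolding bb_def Vs_def g_def by (rule bw(2)[OF kernel n2])
  have gainb: "opt_gain Q r = (\<chi> s. Vs $ s0 / real n)"
    unfolding opt_gain_def Q_def bb_def[symmetric] gain_bias(1)[OF kernel polb n2]
    using Vsb unfolding g_def by simp
  obtain cb where biasb: "opt_bias Q r = Vs - (\<chi> s. cb)"
    using gain_bias(2)[OF kernel polb n2, of s0 r] Vsb unfolding opt_bias_def Q_def bb_def[symmetric] g_def by blast
  have TqW: "Tq P r g v s a - Tq P r g w s a = g * (\<Sum>s'\<in>UNIV. P s a s' * (v - w)$s')" for v w s a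
    by (rule Tq_diff)
  have concl: "sup_norm (Vs - W) \<le> 1 / real n" if "\<And>s. Vs $ s - W $ s \<le> 1 / real n"
    by (rule sup_norm_le) (use that WVs in \<open>simp add: abs_le_iff\<close>)
  have case1: "sup_norm (Vs - W) \<le> 1 / real n"
    if gr: "greedy \<pi> (\<lambda>s a. r s a + (\<Sum>s'\<in>UNIV. anchored n s0 P s a s' * h $ s'))"
    and sp: "sp_norm (opt_bias (anchored n s0 P) r - h) \<le> 1 / real n ^ 2" for h
  proof -
    define e where "e = h - Vs"
    have esp: "e$t - e$s \<le> 1 / real n ^ 2" for s t
      using sp_norm_ge[of "opt_bias Q r - h" s t] sp biasb unfolding Q_def e_def by simp
    obtain s1 where s1: "e$s1 = mxv e" using mxv_in by blast
    obtain s2 where s2: "e$s2 = mnv e" using mnv_in by blast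
    have gap: "mxv e - mnv e \<le> 1 / real n ^ 2" using esp[of s1 s2] s1 s2 by simp
    have Th: "Tq P r g h s a = Tq P r g Vs s a + g * (\<Sum>s'\<in>UNIV. P s a s' * e$s')" for s a
      using TqW[of h s a Vs] unfolding e_def by simp
    have Pe: "mnv e \<le> (\<Sum>s'\<in>UNIV. P s a s' * e$s')" "(\<Sum>s'\<in>UNIV. P s a s' * e$s') \<le> mxv e" for s a
      by (intro kconv_ge[OF kernel] kconv_le[OF kernel] mnv_le mxv_ge)+
    have "Vs $ s - g / real n ^ 2 \<le> (\<Sum>a\<in>UNIV. \<pi> s a * Tq P r g Vs s a)" for s
    proof -
      have gr1: "(\<Sum>a\<in>UNIV. \<pi> s a * (Tq P r g h s a + h$s0 / real n)) = Max (range (\<lambda>a. Tq P r g h s a + h$s0 / real n))"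
        using gr unfolding greedy_def anch_sum Tq_def by (simp add: algebra_simps g_def)
      have "(\<Sum>a\<in>UNIV. \<pi> s a * (Tq P r g h s a + h$s0 / real n)) = (\<Sum>a\<in>UNIV. \<pi> s a * Tq P r g h s a) + (\<Sum>a\<in>UNIV. \<pi> s a) * (h$s0 / real n)"
        by (simp add: distrib_left sum.distrib sum_distrib_right sum_divide_distrib)
      hence "(\<Sum>a\<in>UNIV. \<pi> s a * (Tq P r g h s a + h$s0 / real n)) = (\<Sum>a\<in>UNIV. \<pi> s a * Tq P r g h s a) + h$s0 / real n"
        using pol unfolding is_policy_def by simp
      moreover have "Tq P r g h s (f s) + h$s0 / real n \<le> Max (range (\<lambda>a. Tq P r g h s a + h$s0 / real n))"
        by (rule Max_ge) auto
      ultimately have A: "Tq P r g h s (f s) \<le> (\<Sum>a\<in>UNIV. \<pi> s a * Tq P r g h s a)" using gr1 by simp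
      have B: "(\<Sum>a\<in>UNIV. \<pi> s a * Tq P r g h s a) \<le> (\<Sum>a\<in>UNIV. \<pi> s a * Tq P r g Vs s a) + g * mxv e"
      proof -
        have "(\<Sum>a\<in>UNIV. \<pi> s a * Tq P r g h s a) - (\<Sum>a\<in>UNIV. \<pi> s a * Tq P r g Vs s a) = (\<Sum>a\<in>UNIV. \<pi> s a * (g * (\<Sum>s'\<in>UNIV. P s a s' * e$s')))"
          unfolding Th by (simp add: distrib_left sum.distrib)
        also have "\<dots> \<le> g * mxv e"
          by (rule conv_le[OF pol]) (use Pe g in \<open>simp add: mult_left_mono\<close>)
        finally show ?thesis by simp
      qed
      have C: "Tq P r g Vs s (f s) + g * mnv e \<le> Tq P r g h s (f s)"
        using Th[of s "f s"] Pe[of s "f s"] g by (simp add: mult_left_mono)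
      have "g * (mxv e - mnv e) \<le> g * (1 / real n ^ 2)" using gap g by (intro mult_left_mono) auto
      thus ?thesis using A B C Vsf[of s] by (simp add: right_diff_distrib)
    qed
    hence "(Vs - W) $ s \<le> g * (\<Sum>a\<in>UNIV. \<pi> s a * (\<Sum>s'\<in>UNIV. P s a s' * (Vs - W)$s')) + g / real n ^ 2" for s
    proof -
      have "(\<Sum>a\<in>UNIV. \<pi> s a * Tq P r g Vs s a) - W$s = g * (\<Sum>a\<in>UNIV. \<pi> s a * (\<Sum>s'\<in>UNIV. P s a s' * (Vs - W)$s'))"
        unfolding WE[of s] pol_diff TqW by (simp add: sum_distrib_left mult.left_commute)
      thus ?thesis using \<open>Vs $ s - g / real n ^ 2 \<le> (\<Sum>a\<in>UNIV. \<pi> s a * Tq P r g Vs s a)\<close> by simp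
    qed
    hence H1: "(Vs - W) $ s \<le> (g / real n ^ 2) / (1 - g)" for s by (rule maxp[OF kernel pol g])
    have H2: "(g / real n ^ 2) / (1 - g) \<le> 1 / real n"
      unfolding g1 using n0 g unfolding g_def by (simp add: field_simps power2_eq_square)
    show ?thesis
    proof (rule concl)
      fix s show "Vs $ s - W $ s \<le> 1 / real n" using H1[of s] H2 by simp
    qed
  qed
  have case2: "sup_norm (Vs - W) \<le> 1 / real n"
    if bel: "\<forall>s. bellman (anchored n s0 P) r (bias (anchored n s0 P) r \<pi>) $ s
                 \<le> bias (anchored n s0 P) r \<pi> $ s + gain (anchored n s0 P) r \<pi> $ s + 1 / real n ^ 2"
  proof -
    have WT: "Tq P r g W s a \<le> W $ s + 1 / real n ^ 2" for s a
    proof -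
      define hh where "hh = W - (\<chi> s. cp)"
      have "r s a + (\<Sum>s'\<in>UNIV. anchored n s0 P s a s' * hh $ s') \<le> bellman (anchored n s0 P) r hh $ s"
        unfolding bellman_def by simp
      also have "\<dots> \<le> hh $ s + W$s0 / real n + 1 / real n ^ 2"
        using bel[rule_format, of s] unfolding Q_def[symmetric] biasp gainp hh_def by simp
      finally have "r s a + (\<Sum>s'\<in>UNIV. anchored n s0 P s a s' * hh $ s') \<le> hh $ s + W$s0 / real n + 1 / real n ^ 2" .
      moreover have "(\<Sum>s'\<in>UNIV. P s a s' * hh $ s') = (\<Sum>s'\<in>UNIV. P s a s' * W $ s') - cp"
      proof -
        have "(\<Sum>s'\<in>UNIV. P s a s' * hh $ s') = (\<Sum>s'\<in>UNIV. P s a s' * W $ s') - (\<Sum>s'\<in>UNIV. P s a s') * cp"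
          unfolding hh_def by (simp add: algebra_simps sum_subtractf sum_distrib_right sum_distrib_left)
        thus ?thesis using kernel unfolding is_kernel_def by simp
      qed
      ultimately have F1: "r s a + ((1 - 1/real n) * ((\<Sum>s'\<in>UNIV. P s a s' * W $ s') - cp) + hh$s0 / real n) \<le> hh $ s + W$s0 / real n + 1 / real n ^ 2"
        unfolding anch_sum by simp
      have F2: "(1 - 1/real n) * ((\<Sum>s'\<in>UNIV. P s a s' * W $ s') - cp) = g * (\<Sum>s'\<in>UNIV. P s a s' * W $ s') - g * cp"
        unfolding g_def by (simp add: right_diff_distrib)
      have F3: "hh$s0 / real n = W$s0 / real n - cp / real n" "hh$s = W$s - cp"
        unfolding hh_def by (simp_all add: diff_divide_distrib)
      have F4: "g * cp + cp / real n = cp" unfolding g_def using n0 by (simp add: field_simps)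
      show ?thesis unfolding Tq_def using F1 F2 F3 F4 by linarith
    qed
    have "(Vs - W) $ s \<le> g * (\<Sum>a\<in>UNIV. detp f s a * (\<Sum>s'\<in>UNIV. P s a s' * (Vs - W)$s')) + 1 / real n ^ 2" for s
    proof -
      have "(Vs - W) $ s \<le> Tq P r g Vs s (f s) - Tq P r g W s (f s) + 1 / real n ^ 2"
        using Vsf[of s] WT[of s "f s"] by simp
      thus ?thesis unfolding TqW sum_detp .
    qed
    hence "(Vs - W) $ s \<le> (1 / real n ^ 2) / (1 - g)" for s by (rule maxp[OF kernel detp_pol g])
    moreover have "(1 / real n ^ 2) / (1 - g) = 1 / real n"
      unfolding g1 using n0 by (simp add: field_simps power2_eq_square)
    ultimately show ?thesis by (intro concl) simp
  qed
  have case3: "sup_norm (Vs - W) \<le> 1 / real n"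
    if ga: "\<forall>s. gain (anchored n s0 P) r \<pi> $ s \<ge> opt_gain (anchored n s0 P) r $ s - 1 / (3 * real n ^ 2)"
    and bi: "sup_norm (bias (anchored n s0 P) r \<pi> - opt_bias (anchored n s0 P) r) \<le> 1 / (3 * real n ^ 2)"
  proof -
    define ep where "ep = 1 / (3 * real n ^ 2)"
    have a: "W $ s0 / real n \<ge> Vs $ s0 / real n - ep"
      using ga[rule_format, of s0] unfolding Q_def[symmetric] gainp gainb ep_def by simp
    hence "(Vs $ s0 - W $ s0) / real n \<le> ep" by (simp add: diff_divide_distrib)
    hence a2: "Vs $ s0 - W $ s0 \<le> real n * ep" using n0 by (simp add: pos_divide_le_eq mult.commute)
    have b: "\<bar>W $ s - cp - Vs $ s + cb\<bar> \<le> ep" for s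
      using order_trans[OF sup_norm_ge bi, of s] unfolding Q_def[symmetric] biasp biasb ep_def by simp
    have "Vs $ s - W $ s \<le> 2 * ep + real n * ep" for s
      using b[of s] b[of s0] a2 by (simp add: abs_le_iff)
    moreover have "2 * ep + real n * ep \<le> 1 / real n"
      unfolding ep_def using n0 by (simp add: field_simps power2_eq_square)
    ultimately show ?thesis by (intro concl) (meson order_trans)
  qed
  have part2: "(\<forall>s. gain (anchored n s0 P) r \<pi> $ s \<ge> opt_gain (anchored n s0 P) r $ s - 1 / real n ^ 2)
              \<and> sp_norm (bias (anchored n s0 P) r \<pi> - opt_bias (anchored n s0 P) r) \<le> 2 / real n"
    if sn: "sup_norm (Vs - W) \<le> 1 / real n"
  proof
    have ab: "\<bar>Vs $ s - W $ s\<bar> \<le> 1 / real n" for s using order_trans[OF sup_norm_ge sn, of s] by simp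
    show "\<forall>s. gain (anchored n s0 P) r \<pi> $ s \<ge> opt_gain (anchored n s0 P) r $ s - 1 / real n ^ 2"
    proof
      fix s
      have "Vs $ s0 - W $ s0 \<le> 1 / real n" using ab[of s0] by simp
      hence "(Vs $ s0 - W $ s0) / real n \<le> (1 / real n) / real n"
        using n0 by (intro divide_right_mono) auto
      hence "Vs $ s0 / real n - W $ s0 / real n \<le> 1 / real n ^ 2"
        by (simp add: diff_divide_distrib power2_eq_square)
      thus "gain (anchored n s0 P) r \<pi> $ s \<ge> opt_gain (anchored n s0 P) r $ s - 1 / real n ^ 2"
        unfolding Q_def[symmetric] gainp gainb by simp
    qed
    show "sp_norm (bias (anchored n s0 P) r \<pi> - opt_bias (anchored n s0 P) r) \<le> 2 / real n"
      unfolding Q_def[symmetric] biasp biasb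
    proof (rule sp_norm_le)
      fix s t
      show "(W - (\<chi> s. cp) - (Vs - (\<chi> s. cb))) $ s - (W - (\<chi> s. cp) - (Vs - (\<chi> s. cb))) $ t \<le> 2 / real n"
        using ab[of s] ab[of t] by (simp add: abs_le_iff)
    qed
  qed
  show ?thesis
    using case1 case2 case3 part2 unfolding Vs_def W_def g_def by blast
qed

end
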